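(* Let $1\le p<\infty$ and $W\in\mathbb{W}$. Then for every $\epsilon>0$ the space $G_{W,p}(0,\infty)$ contains a subspace that is $(1+\epsilon)$-isomorphic to $\ell_p$. In particular, $G_{W,1}(0,\infty)$ is not reflexive.
   Context: $\lambda$ is Lebesgue measure on $(0,\infty)$ with its usual order, $\Lambda$ the Lebesgue-measurable subsets. For $E,F\in\Lambda$, $\mathbb{MO}(E,F)$ is the set of strictly increasing bijections $m:E\to F$ with $m,m^{-1}$ measure-preserving. $\mathbb{W}$ is the set of nonincreasing measurable $W:(0,\infty)\to(0,\infty)$ with $\lim_{t\to\infty}W(t)=0$, $\int_0^\infty W=\infty$, $\int_0^1W<\infty$. $\|f\|_G=\sup\{(\int_E|f\circ m|(t)^pW(t)\,dt)^{1/p}:E,F\in\Lambda,\ m\in\mathbb{MO}(E,F)\}$ and $G_{W,p}(0,\infty)$ is the space of a.e.-classes of measurable $f:(0,\infty)\to[-\infty,\infty]$ with $\|f\|_G<\infty$. *)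

theory Defs
  imports "HOL-Analysis.Analysis"
begin

definition WeightClass :: "(real \<Rightarrow> real) set" where
  "WeightClass = {W. W \<in> borel_measurable (restrict_space lebesgue {0<..})
     \<and> (\<forall>t>0. W t > 0)
     \<and> (\<forall>s t. 0 < s \<longrightarrow> s \<le> t \<longrightarrow> W t \<le> W s)
     \<and> (W \<longlongrightarrow> 0) at_top
     \<and> (\<integral>\<^sup>+ t\<in>{0<..}. ennreal (W t) \<partial>lebesgue) = \<infinity>
     \<and> (\<integral>\<^sup>+ t\<in>{0<..1}. ennreal (W t) \<partial>lebesgue) < \<infinity>}"

text \<open>The preimage of \<open>A \<subseteq> E\<close> under \<open>m\<^sup>-\<^sup>1\<close> is \<open>m ` A\<close>.\<close>
definition MO :: "real set \<Rightarrow> real set \<Rightarrow> (real \<Rightarrow> real) set" where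
  "MO E F = {m. strict_mono_on E m \<and> bij_betw m E F
     \<and> (\<forall>B \<in> sets lebesgue. B \<subseteq> F \<longrightarrow>
          (m -` B \<inter> E) \<in> sets lebesgue \<and> emeasure lebesgue (m -` B \<inter> E) = emeasure lebesgue B)
     \<and> (\<forall>A \<in> sets lebesgue. A \<subseteq> E \<longrightarrow>
          m ` A \<in> sets lebesgue \<and> emeasure lebesgue (m ` A) = emeasure lebesgue A)}"

text \<open>\<open>G_sup W p f\<close> is \<open>\<parallel>f\<parallel>_G ^ p\<close> (as an extended nonnegative real): the supremum of
  \<open>\<integral>_E |f \<circ> m|^p W\<close> over all admissible \<open>E, F, m\<close>.\<close>
definition G_sup :: "(real \<Rightarrow> real) \<Rightarrow> real \<Rightarrow> (real \<Rightarrow> real) \<Rightarrow> ennreal" where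
  "G_sup W p f = (SUP (E, F, m) \<in> {(E, F, m). E \<in> sets lebesgue \<and> F \<in> sets lebesgue
        \<and> E \<subseteq> {0<..} \<and> F \<subseteq> {0<..} \<and> m \<in> MO E F}.
      (\<integral>\<^sup>+ t\<in>E. ennreal (\<bar>f (m t)\<bar> powr p * W t) \<partial>lebesgue))"

definition G_norm :: "(real \<Rightarrow> real) \<Rightarrow> real \<Rightarrow> (real \<Rightarrow> real) \<Rightarrow> real" where
  "G_norm W p f = (enn2real (G_sup W p f)) powr (1 / p)"

text \<open>Representatives of elements of \<open>G_{W,p}(0,\<infinity>)\<close>: measurable functions on (0,\<infinity>) with finite norm.\<close>
definition G_space :: "(real \<Rightarrow> real) \<Rightarrow> real \<Rightarrow> (real \<Rightarrow> real) set" where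
  "G_space W p = {f. f \<in> borel_measurable (restrict_space lebesgue {0<..}) \<and> G_sup W p f < \<infinity>}"

definition lp_space :: "real \<Rightarrow> (nat \<Rightarrow> real) set" where
  "lp_space p = {x. summable (\<lambda>n. \<bar>x n\<bar> powr p)}"

definition lp_norm :: "real \<Rightarrow> (nat \<Rightarrow> real) \<Rightarrow> real" where
  "lp_norm p x = (\<Sum>n. \<bar>x n\<bar> powr p) powr (1 / p)"

definition dual_space :: "(real \<Rightarrow> real) set \<Rightarrow> ((real \<Rightarrow> real) \<Rightarrow> real) \<Rightarrow> ((real \<Rightarrow> real) \<Rightarrow> real) set" where
  "dual_space V N = {\<phi>. (\<forall>f\<in>V. \<forall>g\<in>V. \<forall>a b. \<phi> (\<lambda>t. a * f t + b * g t) = a * \<phi> f + b * \<phi> g)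
      \<and> (\<exists>C. \<forall>f\<in>V. \<bar>\<phi> f\<bar> \<le> C * N f)}"

definition dual_norm :: "(real \<Rightarrow> real) set \<Rightarrow> ((real \<Rightarrow> real) \<Rightarrow> real) \<Rightarrow> ((real \<Rightarrow> real) \<Rightarrow> real) \<Rightarrow> real" where
  "dual_norm V N \<phi> = Sup ((\<lambda>f. \<bar>\<phi> f\<bar>) ` {f\<in>V. N f \<le> 1})"

definition reflexive_space :: "(real \<Rightarrow> real) set \<Rightarrow> ((real \<Rightarrow> real) \<Rightarrow> real) \<Rightarrow> bool" where
  "reflexive_space V N \<longleftrightarrow>
     (\<forall>\<Phi> :: ((real \<Rightarrow> real) \<Rightarrow> real) \<Rightarrow> real.
        ((\<forall>\<phi>\<in>dual_space V N. \<forall>\<psi>\<in>dual_space V N. \<forall>a b.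
             \<Phi> (\<lambda>f. a * \<phi> f + b * \<psi> f) = a * \<Phi> \<phi> + b * \<Phi> \<psi>)
         \<and> (\<exists>C. \<forall>\<phi>\<in>dual_space V N. \<bar>\<Phi> \<phi>\<bar> \<le> C * dual_norm V N \<phi>))
        \<longrightarrow> (\<exists>f\<in>V. \<forall>\<phi>\<in>dual_space V N. \<Phi> \<phi> = \<phi> f))"

end

theory Submission imports Defs begin

lemma WC_D:
  assumes "W \<in> WeightClass"
  shows "W \<in> borel_measurable (restrict_space lebesgue {0<..})"
    "\<And>t. t > 0 \<Longrightarrow> W t > 0"
    "\<And>s t. 0 < s \<Longrightarrow> s \<le> t \<Longrightarrow> W t \<le> W s"
    "(\<integral>\<^sup>+ t\<in>{0<..}. ennreal (W t) \<partial>lebesgue) = \<infinity>"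
    "(\<integral>\<^sup>+ t\<in>{0<..1}. ennreal (W t) \<partial>lebesgue) < \<infinity>"
  using assms unfolding WeightClass_def by auto

lemma Wi_meas:
  assumes "W \<in> WeightClass"
  shows "(\<lambda>t. W t * indicator {0<..} t) \<in> borel_measurable lebesgue"
proof -
  have "(\<lambda>t. indicator {0<..} t *\<^sub>R W t) \<in> borel_measurable lebesgue"
    using WC_D(1)[OF assms] borel_measurable_restrict_space_iff[of "{0<..} :: real set" lebesgue W] by simp
  then show ?thesis by (simp add: mult.commute)
qed

lemma Wind_meas:
  assumes "W \<in> WeightClass" "S \<in> sets lebesgue" "S \<subseteq> {0<..}"
  shows "(\<lambda>t. ennreal (W t) * indicator S t) \<in> borel_measurable lebesgue"
proof -
  have "(\<lambda>t. ennreal (W t * indicator {0<..} t) * indicator S t) \<in> borel_measurable lebesgue"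
    using Wi_meas[OF assms(1)] assms(2) by measurable
  moreover have "(\<lambda>t. ennreal (W t * indicator {0<..} t) * indicator S t) = (\<lambda>t. ennreal (W t) * indicator S t)"
    using assms(3) by (auto simp: indicator_def fun_eq_iff)
  ultimately show ?thesis by simp
qed

lemma ind_meas: "S \<in> sets lebesgue \<Longrightarrow> (\<lambda>t. ennreal c * indicator S t) \<in> borel_measurable lebesgue"
  by (intro borel_measurable_times_ennreal borel_measurable_const borel_measurable_indicator)

definition Iw :: "(real \<Rightarrow> real) \<Rightarrow> real \<Rightarrow> ennreal" where
  "Iw W L = (\<integral>\<^sup>+ t\<in>{0<..L}. ennreal (W t) \<partial>lebesgue)"

lemma set_nn_mono:
  assumes "W \<in> WeightClass" "A \<subseteq> B" "B \<subseteq> {0<..}"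
  shows "(\<integral>\<^sup>+ t\<in>A. ennreal (W t) \<partial>lebesgue) \<le> (\<integral>\<^sup>+ t\<in>B. ennreal (W t) \<partial>lebesgue)"
  using assms by (intro nn_integral_mono) (auto simp: indicator_def)

lemma Iw_finite:
  assumes "W \<in> WeightClass"
  shows "Iw W L < \<infinity>"
proof -
  have "Iw W L \<le> (\<integral>\<^sup>+ t. ennreal (W t) * indicator {0<..1} t + ennreal (W 1) * indicator {1<..max 1 L} t \<partial>lebesgue)"
    unfolding Iw_def
  proof (intro nn_integral_mono)
    fix t :: real
    show "ennreal (W t) * indicator {0<..L} t \<le> ennreal (W t) * indicator {0<..1} t + ennreal (W 1) * indicator {1<..max 1 L} t"
    proof (cases "t \<in> {0<..L}")
      case True
      show ?thesis
      proof (cases "t \<le> 1")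
        case True then show ?thesis using \<open>t \<in> {0<..L}\<close> by (auto simp: indicator_def)
      next
        case False
        then have "W t \<le> W 1" using WC_D(3)[OF assms, of 1 t] by auto
        then show ?thesis using False True by (auto simp: indicator_def ennreal_leI)
      qed
    qed (auto simp: indicator_def)
  qed
  also have "\<dots> = (\<integral>\<^sup>+ t\<in>{0<..1}. ennreal (W t) \<partial>lebesgue) + ennreal (W 1) * emeasure lebesgue {1<..max 1 L}"
    by (subst nn_integral_add) (auto intro!: Wind_meas[OF assms] ind_meas simp: nn_integral_cmult_indicator)
  also have "\<dots> < \<infinity>" using WC_D(5)[OF assms] by (simp add: ennreal_mult_less_top)
  finally show ?thesis .
qed

lemma Iw_unbounded:
  assumes "W \<in> WeightClass" "B < \<infinity>"
  shows "\<exists>n::nat. B \<le> Iw W (real n)"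
proof (rule ccontr)
  assume "\<not> ?thesis"
  then have lt: "\<And>n. Iw W (real n) < B" by (simp add: not_le)
  have "(\<integral>\<^sup>+ t\<in>{0<..}. ennreal (W t) \<partial>lebesgue) = (\<integral>\<^sup>+ t. (SUP n. ennreal (W t) * indicator {0<..real n} t) \<partial>lebesgue)"
  proof (intro nn_integral_cong)
    fix t :: real
    show "ennreal (W t) * indicator {0<..} t = (SUP n. ennreal (W t) * indicator {0<..real n} t)"
    proof (cases "t > 0")
      case True
      obtain N :: nat where "t \<le> real N" using real_arch_simple by blast
      have "(SUP n. ennreal (W t) * indicator {0<..real n} t) = ennreal (W t)"
      proof (intro antisym SUP_least)
        show "ennreal (W t) \<le> (SUP n. ennreal (W t) * indicator {0<..real n} t)"
          by (rule SUP_upper2[of N]) (use True \<open>t \<le> real N\<close> in auto)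
      qed (auto simp: indicator_def)
      then show ?thesis using True by simp
    qed (auto simp: indicator_def)
  qed
  also have "\<dots> = (SUP n. Iw W (real n))" unfolding Iw_def
    by (intro nn_integral_monotone_convergence_SUP Wind_meas[OF assms(1)])
       (auto simp: incseq_def le_fun_def indicator_def)
  also have "\<dots> \<le> B" by (intro SUP_least less_imp_le lt)
  finally show False using WC_D(4)[OF assms(1)] assms(2) by simp
qed


lemma split_set_int:
  assumes "W \<in> WeightClass" "A \<in> sets lebesgue" "P \<in> sets lebesgue" "A \<subseteq> {0<..}"
  shows "(\<integral>\<^sup>+ t\<in>A. ennreal (W t) \<partial>lebesgue) =
     (\<integral>\<^sup>+ t\<in>A \<inter> P. ennreal (W t) \<partial>lebesgue) + (\<integral>\<^sup>+ t\<in>A - P. ennreal (W t) \<partial>lebesgue)"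
proof -
  have "(\<integral>\<^sup>+ t\<in>A. ennreal (W t) \<partial>lebesgue) =
     (\<integral>\<^sup>+ t. ennreal (W t) * indicator (A \<inter> P) t + ennreal (W t) * indicator (A - P) t \<partial>lebesgue)"
    by (intro nn_integral_cong) (auto simp: indicator_def)
  also have "\<dots> = (\<integral>\<^sup>+ t\<in>A \<inter> P. ennreal (W t) \<partial>lebesgue) + (\<integral>\<^sup>+ t\<in>A - P. ennreal (W t) \<partial>lebesgue)"
    using assms by (intro nn_integral_add Wind_meas) auto
  finally show ?thesis .
qed

lemma rearr:
  assumes W: "W \<in> WeightClass" and A: "A \<in> sets lebesgue" "A \<subseteq> {0<..}"
    and L: "L > 0" "emeasure lebesgue A \<le> ennreal L"
  shows "(\<integral>\<^sup>+ t\<in>A. ennreal (W t) \<partial>lebesgue) \<le> Iw W L"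
proof -
  define P where "P = {0<..L}"
  have P: "P \<in> sets lebesgue" "P \<subseteq> {0<..}" unfolding P_def by auto
  have e1: "(\<integral>\<^sup>+ t\<in>A. ennreal (W t) \<partial>lebesgue) =
     (\<integral>\<^sup>+ t\<in>A \<inter> P. ennreal (W t) \<partial>lebesgue) + (\<integral>\<^sup>+ t\<in>A - P. ennreal (W t) \<partial>lebesgue)"
    using split_set_int[OF W A(1) P(1) A(2)] .
  have e2: "Iw W L =
     (\<integral>\<^sup>+ t\<in>P \<inter> A. ennreal (W t) \<partial>lebesgue) + (\<integral>\<^sup>+ t\<in>P - A. ennreal (W t) \<partial>lebesgue)"
    unfolding Iw_def P_def[symmetric] using split_set_int[OF W P(1) A(1) P(2)] .
  have b1: "(\<integral>\<^sup>+ t\<in>A - P. ennreal (W t) \<partial>lebesgue) \<le> (\<integral>\<^sup>+ t. ennreal (W L) * indicator (A - P) t \<partial>lebesgue)"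
  proof (intro nn_integral_mono)
    fix t show "ennreal (W t) * indicator (A - P) t \<le> ennreal (W L) * indicator (A - P) t"
      using WC_D(3)[OF W, of L t] L A(2) unfolding P_def by (auto simp: indicator_def ennreal_leI)
  qed
  have b2: "(\<integral>\<^sup>+ t. ennreal (W L) * indicator (P - A) t \<partial>lebesgue) \<le> (\<integral>\<^sup>+ t\<in>P - A. ennreal (W t) \<partial>lebesgue)"
  proof (intro nn_integral_mono)
    fix t show "ennreal (W L) * indicator (P - A) t \<le> ennreal (W t) * indicator (P - A) t"
      using WC_D(3)[OF W, of t L] L unfolding P_def by (auto simp: indicator_def ennreal_leI)
  qed
  have u1: "A \<inter> P \<union> (A - P) = A" by auto
  have "emeasure lebesgue (A \<inter> P) + emeasure lebesgue (A - P) = emeasure lebesgue (A \<inter> P \<union> (A - P))"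
    by (rule plus_emeasure) (use A P in auto)
  then have mA: "emeasure lebesgue A = emeasure lebesgue (A \<inter> P) + emeasure lebesgue (A - P)"
    by (simp only: u1)
  have u2: "A \<inter> P \<union> (P - A) = P" by auto
  have "emeasure lebesgue (A \<inter> P) + emeasure lebesgue (P - A) = emeasure lebesgue (A \<inter> P \<union> (P - A))"
    by (rule plus_emeasure) (use A P in auto)
  then have mP: "emeasure lebesgue P = emeasure lebesgue (A \<inter> P) + emeasure lebesgue (P - A)"
    by (simp only: u2)
  have PL: "emeasure lebesgue P = ennreal L" unfolding P_def using L by simp
  have "emeasure lebesgue (A \<inter> P) + emeasure lebesgue (A - P) = emeasure lebesgue A" using mA by simp
  also have "\<dots> \<le> ennreal L" by (rule L(2))
  also have "\<dots> = emeasure lebesgue P" using PL by simp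
  also have "\<dots> = emeasure lebesgue (A \<inter> P) + emeasure lebesgue (P - A)" by (rule mP)
  finally have "emeasure lebesgue (A \<inter> P) + emeasure lebesgue (A - P) \<le> emeasure lebesgue (A \<inter> P) + emeasure lebesgue (P - A)" .
  moreover have "emeasure lebesgue (A \<inter> P) < \<infinity>"
  proof -
    have "emeasure lebesgue (A \<inter> P) \<le> emeasure lebesgue P" by (rule emeasure_mono) (use P in auto)
    also have "\<dots> < \<infinity>" using PL by simp
    finally show ?thesis .
  qed
  ultimately have m: "emeasure lebesgue (A - P) \<le> emeasure lebesgue (P - A)"
    using ennreal_add_left_cancel_le by auto
  have "(\<integral>\<^sup>+ t\<in>A - P. ennreal (W t) \<partial>lebesgue) \<le> (\<integral>\<^sup>+ t\<in>P - A. ennreal (W t) \<partial>lebesgue)"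
  proof -
    have "(\<integral>\<^sup>+ t\<in>A - P. ennreal (W t) \<partial>lebesgue) \<le> ennreal (W L) * emeasure lebesgue (A - P)"
      using b1 A P by (simp add: nn_integral_cmult_indicator)
    also have "\<dots> \<le> ennreal (W L) * emeasure lebesgue (P - A)" using m by (intro mult_left_mono) auto
    also have "\<dots> \<le> (\<integral>\<^sup>+ t\<in>P - A. ennreal (W t) \<partial>lebesgue)"
      using b2 A P by (simp add: nn_integral_cmult_indicator)
    finally show ?thesis .
  qed
  moreover have "P \<inter> A = A \<inter> P" by auto
  ultimately show ?thesis unfolding e1 e2 by (simp add: add_left_mono)
qed


lemma Iw_mono: "W \<in> WeightClass \<Longrightarrow> L1 \<le> L2 \<Longrightarrow> Iw W L1 \<le> Iw W L2"
  unfolding Iw_def by (rule set_nn_mono) auto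

lemma Iw_add:
  assumes "W \<in> WeightClass" "0 \<le> a" "a \<le> b"
  shows "Iw W b = Iw W a + (\<integral>\<^sup>+ t\<in>{a<..b}. ennreal (W t) \<partial>lebesgue)"
proof -
  have "Iw W b = (\<integral>\<^sup>+ t\<in>{0<..b} \<inter> {0<..a}. ennreal (W t) \<partial>lebesgue) + (\<integral>\<^sup>+ t\<in>{0<..b} - {0<..a}. ennreal (W t) \<partial>lebesgue)"
    unfolding Iw_def by (rule split_set_int[OF assms(1)]) auto
  moreover have "{0<..b} \<inter> {0<..a} = {0<..a}" "{0<..b} - {0<..a} = {a<..b}" using assms by auto
  ultimately show ?thesis unfolding Iw_def by simp
qed

locale constr =
  fixes W :: "real \<Rightarrow> real" and \<delta> :: real and p :: real
  assumes W: "W \<in> WeightClass" and d0: "0 < \<delta>" and d1: "\<delta> < 1" and p1: "1 \<le> p"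
begin

definition iw :: "real \<Rightarrow> real" where "iw L = enn2real (Iw W L)"

lemma Iw_eq: "Iw W L = ennreal (iw L)"
  unfolding iw_def using Iw_finite[OF W, of L] by (simp add: less_top)

lemma iw_nonneg: "0 \<le> iw L" unfolding iw_def by simp

lemma iw_mono: "L1 \<le> L2 \<Longrightarrow> iw L1 \<le> iw L2"
  using Iw_mono[OF W, of L1 L2] unfolding Iw_eq by (simp add: iw_nonneg)

definition Lsel :: "real \<Rightarrow> real" where
  "Lsel a = (SOME L. 1 \<le> L \<and> iw a \<le> (1 - \<delta>) * iw L)"

lemma Lsel: "1 \<le> Lsel a \<and> iw a \<le> (1 - \<delta>) * iw (Lsel a)"
proof -
  obtain n :: nat where n: "ennreal (iw a / (1 - \<delta>)) \<le> Iw W (real n)"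
    using Iw_unbounded[OF W, of "ennreal (iw a / (1 - \<delta>))"] by auto
  define L where "L = max 1 (real n)"
  have "iw a / (1 - \<delta>) \<le> iw (real n)" using n unfolding Iw_eq
    by (simp add: iw_nonneg)
  also have "\<dots> \<le> iw L" unfolding L_def by (rule iw_mono) simp
  finally have "iw a \<le> (1 - \<delta>) * iw L" using d1 by (simp add: field_simps)
  then have "1 \<le> L \<and> iw a \<le> (1 - \<delta>) * iw L" unfolding L_def by simp
  then show ?thesis unfolding Lsel_def by (rule someI)
qed

primrec s :: "nat \<Rightarrow> real" where
  "s 0 = 0"
| "s (Suc n) = s n + Lsel (s n)"

lemma s_Suc_ge: "s n + 1 \<le> s (Suc n)" using Lsel[of "s n"] by simp

lemma s_ge: "real n \<le> s n"
proof (induction n)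
  case (Suc n)
  then show ?case using s_Suc_ge[of n] by simp
qed simp

lemma s_nonneg: "0 \<le> s n" using s_ge[of n] by simp

lemma s_mono: "m \<le> n \<Longrightarrow> s m \<le> s n"
proof (induction n)
  case (Suc n)
  then show ?case using s_Suc_ge[of n] by (cases "m = Suc n") auto
qed simp

definition I :: "nat \<Rightarrow> real set" where "I n = {s n<..s (Suc n)}"

lemma I_sets: "I n \<in> sets lebesgue" unfolding I_def by simp

lemma I_pos: "I n \<subseteq> {0<..}" unfolding I_def using s_nonneg[of n] by auto

lemma I_disj: assumes "u \<in> I j" "u \<in> I k" shows "j = k"
proof (rule ccontr)
  assume "j \<noteq> k"
  then consider "Suc j \<le> k" | "Suc k \<le> j" by linarith
  then show False
  proof cases
    case 1 then show False using s_mono[OF 1] assms unfolding I_def by auto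
  next
    case 2 then show False using s_mono[OF 2] assms unfolding I_def by auto
  qed
qed

lemma I_far: "u \<in> I n \<Longrightarrow> real n < u"
  using s_ge[of n] unfolding I_def by auto

definition a :: "nat \<Rightarrow> real" where "a n = enn2real (\<integral>\<^sup>+ t\<in>I n. ennreal (W t) \<partial>lebesgue)"

lemma a_eq: "(\<integral>\<^sup>+ t\<in>I n. ennreal (W t) \<partial>lebesgue) = ennreal (a n)"
proof -
  have "(\<integral>\<^sup>+ t\<in>I n. ennreal (W t) \<partial>lebesgue) \<le> Iw W (s (Suc n))"
    unfolding Iw_def I_def by (rule set_nn_mono[OF W]) (use s_nonneg[of n] in auto)
  then have "(\<integral>\<^sup>+ t\<in>I n. ennreal (W t) \<partial>lebesgue) < \<infinity>"
    using Iw_finite[OF W] order_le_less_trans by blast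
  then show ?thesis unfolding a_def by (simp add: less_top)
qed

lemma a_pos: "0 < a n"
proof -
  have "ennreal (W (s (Suc n))) * emeasure lebesgue (I n) = (\<integral>\<^sup>+ t. ennreal (W (s (Suc n))) * indicator (I n) t \<partial>lebesgue)"
    by (simp add: nn_integral_cmult_indicator I_sets)
  also have "\<dots> \<le> (\<integral>\<^sup>+ t\<in>I n. ennreal (W t) \<partial>lebesgue)"
  proof (intro nn_integral_mono)
    fix t show "ennreal (W (s (Suc n))) * indicator (I n) t \<le> ennreal (W t) * indicator (I n) t"
      using WC_D(3)[OF W, of t "s (Suc n)"] I_pos[of n] unfolding I_def
      by (auto simp: indicator_def ennreal_leI)
  qed
  finally have "ennreal (W (s (Suc n))) * emeasure lebesgue (I n) \<le> ennreal (a n)" unfolding a_eq .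
  moreover have "emeasure lebesgue (I n) = ennreal (s (Suc n) - s n)" unfolding I_def
    using s_mono[of n "Suc n"] by simp
  moreover have "0 < W (s (Suc n))" using WC_D(2)[OF W] s_Suc_ge[of n] s_nonneg[of n] by simp
  moreover have "0 < s (Suc n) - s n" using s_Suc_ge[of n] by simp
  ultimately have "ennreal (W (s (Suc n)) * (s (Suc n) - s n)) \<le> ennreal (a n)"
    by (simp add: ennreal_mult)
  moreover have "0 < W (s (Suc n)) * (s (Suc n) - s n)"
    using \<open>0 < W (s (Suc n))\<close> \<open>0 < s (Suc n) - s n\<close> by simp
  ultimately show ?thesis
    by (metis ennreal_le_iff2 ennreal_less_zero_iff not_less order_less_le_trans)
qed

lemma a_big: "\<delta> * iw (Lsel (s n)) \<le> a n"
proof -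
  let ?L = "Lsel (s n)"
  have "Iw W (s (Suc n)) = Iw W (s n) + ennreal (a n)"
    unfolding a_eq[symmetric] I_def by (rule Iw_add[OF W s_nonneg s_mono]) simp
  then have e: "iw (s (Suc n)) = iw (s n) + a n" unfolding Iw_eq
    using a_pos[of n] iw_nonneg by (simp flip: ennreal_plus)
  have "iw ?L \<le> iw (s (Suc n))" by (rule iw_mono) (use s_nonneg[of n] in simp)
  then show ?thesis using e Lsel[of "s n"] by (simp add: algebra_simps)
qed

lemma bound:
  assumes "A \<in> sets lebesgue" "A \<subseteq> {0<..}" "emeasure lebesgue A \<le> emeasure lebesgue (I n)"
  shows "(\<integral>\<^sup>+ t\<in>A. ennreal (W t) \<partial>lebesgue) \<le> ennreal (a n / \<delta>)"
proof -
  let ?L = "Lsel (s n)"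
  have "emeasure lebesgue (I n) = ennreal ?L" unfolding I_def
    using s_mono[of n "Suc n"] by simp
  then have "(\<integral>\<^sup>+ t\<in>A. ennreal (W t) \<partial>lebesgue) \<le> Iw W ?L"
    using Lsel[of "s n"] assms by (intro rearr[OF W]) auto
  also have "\<dots> = ennreal (iw ?L)" by (rule Iw_eq)
  also have "\<dots> \<le> ennreal (a n / \<delta>)" using a_big[of n] d0 by (intro ennreal_leI) (simp add: field_simps)
  finally show ?thesis .
qed

end


context constr
begin

definition c :: "nat \<Rightarrow> real" where "c n = a n powr (-1/p)"

definition T :: "(nat \<Rightarrow> real) \<Rightarrow> real \<Rightarrow> real" where
  "T x u = (\<Sum>n. x n * c n * indicator (I n) u)"

lemma T_sums: "(\<lambda>n. x n * c n * indicator (I n) u) sums T x u"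
proof (cases "\<exists>k. u \<in> I k")
  case True
  then obtain k where k: "u \<in> I k" by auto
  have "(\<lambda>n. x n * c n * indicator (I n) u) = (\<lambda>n. if n = k then x k * c k else 0)"
  proof
    fix n show "x n * c n * indicator (I n) u = (if n = k then x k * c k else 0)"
    proof (cases "n = k")
      case False then have "u \<notin> I n" using I_disj k by blast
      then show ?thesis using False by simp
    qed (use k in simp)
  qed
  then have "(\<lambda>n. x n * c n * indicator (I n) u) sums (x k * c k)"
    using sums_single[of k "\<lambda>_. x k * c k"] by simp
  then show ?thesis unfolding T_def by (rule summable_sums[OF sums_summable])
next
  case False
  then have "(\<lambda>n. x n * c n * indicator (I n) u) = (\<lambda>n. 0)" by (auto simp: fun_eq_iff)
  then show ?thesis unfolding T_def by simp
qed

lemma T_in: "u \<in> I k \<Longrightarrow> T x u = x k * c k"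
proof -
  assume k: "u \<in> I k"
  have "(\<lambda>n. x n * c n * indicator (I n) u) = (\<lambda>n. if n = k then x k * c k else 0)"
  proof
    fix n show "x n * c n * indicator (I n) u = (if n = k then x k * c k else 0)"
    proof (cases "n = k")
      case False then have "u \<notin> I n" using I_disj k by blast
      then show ?thesis using False by simp
    qed (use k in simp)
  qed
  then have "(\<lambda>n. x n * c n * indicator (I n) u) sums (x k * c k)"
    using sums_single[of k "\<lambda>_. x k * c k"] by simp
  then show ?thesis using T_sums sums_unique2 by blast
qed

lemma T_out: "(\<And>k. u \<notin> I k) \<Longrightarrow> T x u = 0"
  unfolding T_def by simp

lemma T_meas: "T x \<in> borel_measurable lebesgue"
proof (rule borel_measurable_LIMSEQ_real)
  show "(\<lambda>i. (\<Sum>n<i. x n * c n * indicator (I n) u)) \<longlonglongrightarrow> T x u" for u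
    using T_sums[of x u] unfolding sums_def .
  show "(\<lambda>u. \<Sum>n<i. x n * c n * indicator (I n) u) \<in> borel_measurable lebesgue" for i
    using I_sets by (intro borel_measurable_sum borel_measurable_times borel_measurable_const borel_measurable_indicator) auto
qed

lemma T_meas': "T x \<in> borel_measurable (restrict_space lebesgue {0<..})"
  by (rule measurable_restrict_space1) (rule T_meas)

lemma T_lin: "T (\<lambda>n. \<alpha> * x n + \<beta> * y n) = (\<lambda>t. \<alpha> * T x t + \<beta> * T y t)"
proof
  fix u
  show "T (\<lambda>n. \<alpha> * x n + \<beta> * y n) u = \<alpha> * T x u + \<beta> * T y u"
  proof (cases "\<exists>k. u \<in> I k")
    case True
    then obtain k where "u \<in> I k" by auto
    then show ?thesis by (simp add: T_in algebra_simps)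
  next
    case False then show ?thesis by (simp add: T_out)
  qed
qed

lemma c_pow: "c k powr p = 1 / a k"
proof -
  have "c k powr p = a k powr (-1/p * p)" unfolding c_def by (simp add: powr_powr)
  also have "-1/p * p = -1" using p1 by simp
  finally show ?thesis using a_pos[of k] by (simp add: powr_minus divide_inverse)
qed

lemma T_pow:
  assumes "0 \<le> w"
  shows "ennreal (\<bar>T x u\<bar> powr p * w) = (\<Sum>n. ennreal (\<bar>x n\<bar> powr p / a n) * ennreal w * indicator (I n) u)"
proof (cases "\<exists>k. u \<in> I k")
  case True
  then obtain k where k: "u \<in> I k" by auto
  have "(\<lambda>n. ennreal (\<bar>x n\<bar> powr p / a n) * ennreal w * indicator (I n) u) =
        (\<lambda>n. if n = k then ennreal (\<bar>x k\<bar> powr p / a k) * ennreal w else 0)"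
  proof
    fix n show "ennreal (\<bar>x n\<bar> powr p / a n) * ennreal w * indicator (I n) u = (if n = k then ennreal (\<bar>x k\<bar> powr p / a k) * ennreal w else 0)"
    proof (cases "n = k")
      case False then have "u \<notin> I n" using I_disj k by blast
      then show ?thesis using False by simp
    qed (use k in simp)
  qed
  then have "(\<Sum>n. ennreal (\<bar>x n\<bar> powr p / a n) * ennreal w * indicator (I n) u) = ennreal (\<bar>x k\<bar> powr p / a k) * ennreal w"
    using sums_unique[OF sums_single[of k "\<lambda>_. ennreal (\<bar>x k\<bar> powr p / a k) * ennreal w"], symmetric] by simp
  moreover have "\<bar>T x u\<bar> powr p = \<bar>x k\<bar> powr p / a k"
    using T_in[OF k, of x] c_pow[of k] a_pos[of k] unfolding c_def
    by (simp add: abs_mult powr_mult)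
  moreover have "ennreal (\<bar>x k\<bar> powr p / a k) * ennreal w = ennreal (\<bar>x k\<bar> powr p / a k * w)"
    by (rule ennreal_mult[symmetric]) (use assms a_pos[of k] in auto)
  ultimately show ?thesis by simp
next
  case False
  then show ?thesis by (simp add: T_out)
qed

lemma MO_pre:
  assumes "E \<in> sets lebesgue" "F \<in> sets lebesgue" "m \<in> MO E F"
  shows "m -` I n \<inter> E \<in> sets lebesgue" "emeasure lebesgue (m -` I n \<inter> E) \<le> emeasure lebesgue (I n)"
proof -
  have bij: "bij_betw m E F" and pre: "\<And>B. B \<in> sets lebesgue \<Longrightarrow> B \<subseteq> F \<Longrightarrow>
          (m -` B \<inter> E) \<in> sets lebesgue \<and> emeasure lebesgue (m -` B \<inter> E) = emeasure lebesgue B"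
    using assms(3) unfolding MO_def by auto
  have eq: "m -` (I n \<inter> F) \<inter> E = m -` I n \<inter> E" using bij by (auto simp: bij_betw_def)
  have "I n \<inter> F \<in> sets lebesgue" using I_sets assms(2) by auto
  from pre[OF this] have "m -` I n \<inter> E \<in> sets lebesgue \<and> emeasure lebesgue (m -` I n \<inter> E) = emeasure lebesgue (I n \<inter> F)"
    unfolding eq by auto
  moreover have "emeasure lebesgue (I n \<inter> F) \<le> emeasure lebesgue (I n)"
    by (rule emeasure_mono) (use I_sets in auto)
  ultimately show "m -` I n \<inter> E \<in> sets lebesgue" "emeasure lebesgue (m -` I n \<inter> E) \<le> emeasure lebesgue (I n)"
    by auto
qed

lemma int_formula:
  assumes E: "E \<in> sets lebesgue" "E \<subseteq> {0<..}" and F: "F \<in> sets lebesgue" "F \<subseteq> {0<..}" and m: "m \<in> MO E F"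
  shows "(\<integral>\<^sup>+ t\<in>E. ennreal (\<bar>T x (m t)\<bar> powr p * W t) \<partial>lebesgue) =
     (\<Sum>n. ennreal (\<bar>x n\<bar> powr p / a n) * (\<integral>\<^sup>+ t\<in>m -` I n \<inter> E. ennreal (W t) \<partial>lebesgue))"
proof -
  have "(\<integral>\<^sup>+ t\<in>E. ennreal (\<bar>T x (m t)\<bar> powr p * W t) \<partial>lebesgue) =
     (\<integral>\<^sup>+ t. (\<Sum>n. ennreal (\<bar>x n\<bar> powr p / a n) * (ennreal (W t) * indicator (m -` I n \<inter> E) t)) \<partial>lebesgue)"
  proof (intro nn_integral_cong)
    fix t
    show "ennreal (\<bar>T x (m t)\<bar> powr p * W t) * indicator E t =
       (\<Sum>n. ennreal (\<bar>x n\<bar> powr p / a n) * (ennreal (W t) * indicator (m -` I n \<inter> E) t))"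
    proof (cases "t \<in> E")
      case True
      then have "0 \<le> W t" using E(2) WC_D(2)[OF W, of t] by auto
      from T_pow[OF this, of x "m t"] True show ?thesis
        by (simp add: indicator_def mult.assoc)
    next
      case False then show ?thesis by simp
    qed
  qed
  also have "\<dots> = (\<Sum>n. (\<integral>\<^sup>+ t. ennreal (\<bar>x n\<bar> powr p / a n) * (ennreal (W t) * indicator (m -` I n \<inter> E) t) \<partial>lebesgue))"
    by (rule nn_integral_suminf)
       (intro borel_measurable_times_ennreal borel_measurable_const Wind_meas[OF W] MO_pre[OF E(1) F(1) m], use E(2) in auto)
  also have "\<dots> = (\<Sum>n. ennreal (\<bar>x n\<bar> powr p / a n) * (\<integral>\<^sup>+ t\<in>m -` I n \<inter> E. ennreal (W t) \<partial>lebesgue))"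
    by (intro suminf_cong nn_integral_cmult Wind_meas[OF W] MO_pre[OF E(1) F(1) m]) (use E(2) in auto)
  finally show ?thesis .
qed

end


lemma id_MO: "id \<in> MO {0<..} {0<..}"
  unfolding MO_def by (auto simp: strict_mono_on_def Int_absorb2)

context constr
begin

lemma Gsup_upper:
  assumes sx: "summable (\<lambda>n. \<bar>x n\<bar> powr p)"
  shows "G_sup W p (T x) \<le> ennreal ((\<Sum>n. \<bar>x n\<bar> powr p) / \<delta>)"
  unfolding G_sup_def
proof (rule SUP_least)
  fix z assume "z \<in> {(E, F, m). E \<in> sets lebesgue \<and> F \<in> sets lebesgue \<and> E \<subseteq> {0<..} \<and> F \<subseteq> {0<..} \<and> m \<in> MO E F}"
  then obtain E F m where z: "z = (E, F, m)" and E: "E \<in> sets lebesgue" "E \<subseteq> {0<..}"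
    and F: "F \<in> sets lebesgue" "F \<subseteq> {0<..}" and m: "m \<in> MO E F" by auto
  have "(\<integral>\<^sup>+ t\<in>E. ennreal (\<bar>T x (m t)\<bar> powr p * W t) \<partial>lebesgue) =
     (\<Sum>n. ennreal (\<bar>x n\<bar> powr p / a n) * (\<integral>\<^sup>+ t\<in>m -` I n \<inter> E. ennreal (W t) \<partial>lebesgue))"
    by (rule int_formula[OF E F m])
  also have "\<dots> \<le> (\<Sum>n. ennreal (\<bar>x n\<bar> powr p / \<delta>))"
  proof (intro suminf_le summableI)
    fix n
    have "(\<integral>\<^sup>+ t\<in>m -` I n \<inter> E. ennreal (W t) \<partial>lebesgue) \<le> ennreal (a n / \<delta>)"
      by (rule bound) (use MO_pre[OF E(1) F(1) m, of n] E(2) in auto)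
    then have "ennreal (\<bar>x n\<bar> powr p / a n) * (\<integral>\<^sup>+ t\<in>m -` I n \<inter> E. ennreal (W t) \<partial>lebesgue)
        \<le> ennreal (\<bar>x n\<bar> powr p / a n) * ennreal (a n / \<delta>)" by (rule mult_left_mono) simp
    also have "\<dots> = ennreal (\<bar>x n\<bar> powr p / a n * (a n / \<delta>))"
      by (rule ennreal_mult[symmetric]) (use a_pos[of n] d0 in auto)
    also have "\<bar>x n\<bar> powr p / a n * (a n / \<delta>) = \<bar>x n\<bar> powr p / \<delta>" using a_pos[of n] by simp
    finally show "ennreal (\<bar>x n\<bar> powr p / a n) * (\<integral>\<^sup>+ t\<in>m -` I n \<inter> E. ennreal (W t) \<partial>lebesgue)
        \<le> ennreal (\<bar>x n\<bar> powr p / \<delta>)" .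
  qed
  also have "\<dots> = ennreal (\<Sum>n. \<bar>x n\<bar> powr p / \<delta>)"
    by (rule suminf_ennreal2) (use sx d0 in \<open>auto intro: summable_divide\<close>)
  also have "(\<Sum>n. \<bar>x n\<bar> powr p / \<delta>) = (\<Sum>n. \<bar>x n\<bar> powr p) / \<delta>"
    by (rule suminf_divide[OF sx])
  finally show "(case z of (E, F, m) \<Rightarrow> \<integral>\<^sup>+ t\<in>E. ennreal (\<bar>T x (m t)\<bar> powr p * W t) \<partial>lebesgue)
      \<le> ennreal ((\<Sum>n. \<bar>x n\<bar> powr p) / \<delta>)" unfolding z by simp
qed

lemma Gsup_lower:
  assumes sx: "summable (\<lambda>n. \<bar>x n\<bar> powr p)"
  shows "ennreal (\<Sum>n. \<bar>x n\<bar> powr p) \<le> G_sup W p (T x)"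
proof -
  have idx: "({0<..}, {0<..}, id) \<in> {(E, F, m). E \<in> sets lebesgue \<and> F \<in> sets lebesgue \<and> E \<subseteq> {0<..} \<and> F \<subseteq> ({0<..} :: real set) \<and> m \<in> MO E F}"
    using id_MO by auto
  have "ennreal (\<Sum>n. \<bar>x n\<bar> powr p) = (\<Sum>n. ennreal (\<bar>x n\<bar> powr p))"
    by (rule suminf_ennreal2[symmetric]) (use sx in auto)
  also have "\<dots> = (\<Sum>n. ennreal (\<bar>x n\<bar> powr p / a n) * (\<integral>\<^sup>+ t\<in>id -` I n \<inter> {0<..}. ennreal (W t) \<partial>lebesgue))"
  proof (intro suminf_cong)
    fix n
    have "id -` I n \<inter> {0<..} = I n" using I_pos[of n] by auto
    then have "ennreal (\<bar>x n\<bar> powr p / a n) * (\<integral>\<^sup>+ t\<in>id -` I n \<inter> {0<..}. ennreal (W t) \<partial>lebesgue)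
       = ennreal (\<bar>x n\<bar> powr p / a n) * ennreal (a n)" using a_eq[of n] by simp
    also have "\<dots> = ennreal (\<bar>x n\<bar> powr p / a n * a n)"
      by (rule ennreal_mult[symmetric]) (use a_pos[of n] in auto)
    also have "\<bar>x n\<bar> powr p / a n * a n = \<bar>x n\<bar> powr p" using a_pos[of n] by simp
    finally show "ennreal (\<bar>x n\<bar> powr p) = ennreal (\<bar>x n\<bar> powr p / a n) * (\<integral>\<^sup>+ t\<in>id -` I n \<inter> {0<..}. ennreal (W t) \<partial>lebesgue)" by simp
  qed
  also have "\<dots> = (\<integral>\<^sup>+ t\<in>{0<..}. ennreal (\<bar>T x (id t)\<bar> powr p * W t) \<partial>lebesgue)"
    by (rule int_formula[symmetric]) (use id_MO in auto)
  also have "\<dots> \<le> G_sup W p (T x)"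
    unfolding G_sup_def by (rule SUP_upper2[OF idx]) simp
  finally show ?thesis .
qed

lemma T_props:
  assumes x: "x \<in> lp_space p"
  shows "T x \<in> G_space W p" "lp_norm p x \<le> G_norm W p (T x)"
    "G_norm W p (T x) \<le> \<delta> powr (-1/p) * lp_norm p x"
proof -
  have sx: "summable (\<lambda>n. \<bar>x n\<bar> powr p)" using x unfolding lp_space_def by simp
  define S where "S = (\<Sum>n. \<bar>x n\<bar> powr p)"
  have S0: "0 \<le> S" unfolding S_def by (intro suminf_nonneg sx) simp
  have up: "G_sup W p (T x) \<le> ennreal (S / \<delta>)" using Gsup_upper[OF sx] unfolding S_def .
  have lo: "ennreal S \<le> G_sup W p (T x)" using Gsup_lower[OF sx] unfolding S_def .
  have fin: "G_sup W p (T x) < \<infinity>" using up by (simp add: le_less_trans)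
  then show "T x \<in> G_space W p" unfolding G_space_def using T_meas' by auto
  define g where "g = enn2real (G_sup W p (T x))"
  have gS: "S \<le> g" unfolding g_def using enn2real_mono[of "ennreal S" "G_sup W p (T x)"] lo fin S0 by simp
  have "S / \<delta> \<ge> 0" using S0 d0 by simp
  then have gU: "g \<le> S / \<delta>" unfolding g_def using enn2real_mono[OF up] by simp
  have pp: "0 < 1 / p" using p1 by simp
  show "lp_norm p x \<le> G_norm W p (T x)"
    unfolding lp_norm_def G_norm_def g_def[symmetric] S_def[symmetric]
    by (rule powr_mono2) (use pp S0 gS in auto)
  have "G_norm W p (T x) = g powr (1/p)" unfolding G_norm_def g_def ..
  also have "\<dots> \<le> (S / \<delta>) powr (1/p)" by (rule powr_mono2) (use pp S0 gS gU in auto)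
  also have "\<dots> = S powr (1/p) / \<delta> powr (1/p)" using S0 d0 by (simp add: powr_divide)
  also have "\<dots> = \<delta> powr (-1/p) * S powr (1/p)" using d0 by (simp add: powr_minus_divide divide_inverse powr_minus)
  finally show "G_norm W p (T x) \<le> \<delta> powr (-1/p) * lp_norm p x" unfolding lp_norm_def S_def .
qed

end


definition phiA :: "(real \<Rightarrow> real) \<Rightarrow> real set \<Rightarrow> (real \<Rightarrow> real) \<Rightarrow> real" where
  "phiA W A f = (\<integral> t. f t * W t * indicator A t \<partial>lebesgue)"

lemma G_int_bound:
  assumes W: "W \<in> WeightClass" and f: "f \<in> G_space W 1" and A: "A \<in> sets lebesgue" "A \<subseteq> {0<..}"
  shows "integrable lebesgue (\<lambda>t. f t * W t * indicator A t)"
    "(\<integral>\<^sup>+ t. ennreal (norm (f t * W t * indicator A t)) \<partial>lebesgue) \<le> G_sup W 1 f"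
proof -
  have fm: "(\<lambda>t. indicator {0<..} t *\<^sub>R f t) \<in> borel_measurable lebesgue"
    using f unfolding G_space_def using borel_measurable_restrict_space_iff[of "{0<..} :: real set" lebesgue f] by simp
  have eq: "(\<lambda>t. f t * W t * indicator A t) = (\<lambda>t. (indicator {0<..} t *\<^sub>R f t) * (W t * indicator {0<..} t) * indicator A t)"
    using A(2) by (auto simp: fun_eq_iff indicator_def)
  have meas: "(\<lambda>t. f t * W t * indicator A t) \<in> borel_measurable lebesgue"
    unfolding eq using fm Wi_meas[OF W] A(1) by measurable
  have idx: "({0<..}, {0<..}, id) \<in> {(E, F, m). E \<in> sets lebesgue \<and> F \<in> sets lebesgue \<and> E \<subseteq> {0<..} \<and> F \<subseteq> ({0<..} :: real set) \<and> m \<in> MO E F}"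
    using id_MO by auto
  have "(\<integral>\<^sup>+ t. ennreal (norm (f t * W t * indicator A t)) \<partial>lebesgue) \<le> (\<integral>\<^sup>+ t\<in>{0<..}. ennreal (\<bar>f (id t)\<bar> powr 1 * W t) \<partial>lebesgue)"
  proof (intro nn_integral_mono)
    fix t
    show "ennreal (norm (f t * W t * indicator A t)) \<le> ennreal (\<bar>f (id t)\<bar> powr 1 * W t) * indicator {0<..} t"
    proof (cases "t \<in> A")
      case True
      then have "t > 0" using A(2) by auto
      then have "W t > 0" using WC_D(2)[OF W] by auto
      then show ?thesis using True \<open>t > 0\<close> by (simp add: abs_mult)
    qed simp
  qed
  also have "\<dots> \<le> G_sup W 1 f"
    unfolding G_sup_def by (rule SUP_upper2[OF idx]) simp
  finally show bnd: "(\<integral>\<^sup>+ t. ennreal (norm (f t * W t * indicator A t)) \<partial>lebesgue) \<le> G_sup W 1 f" .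
  have "G_sup W 1 f < \<infinity>" using f unfolding G_space_def by simp
  then show "integrable lebesgue (\<lambda>t. f t * W t * indicator A t)"
    unfolding integrable_iff_bounded using meas bnd by (simp add: le_less_trans)
qed

lemma phiA_dual:
  assumes W: "W \<in> WeightClass" and A: "A \<in> sets lebesgue" "A \<subseteq> {0<..}"
  shows "phiA W A \<in> dual_space (G_space W 1) (G_norm W 1)"
  unfolding dual_space_def
proof (intro CollectI conjI ballI allI exI[of _ 1])
  fix f g a b assume f: "f \<in> G_space W 1" and g: "g \<in> G_space W 1"
  have e: "(\<lambda>t. (a * f t + b * g t) * W t * indicator A t) = (\<lambda>t. a * (f t * W t * indicator A t) + b * (g t * W t * indicator A t))"
    by (simp add: fun_eq_iff algebra_simps)
  show "phiA W A (\<lambda>t. a * f t + b * g t) = a * phiA W A f + b * phiA W A g"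
    unfolding phiA_def e
    using G_int_bound(1)[OF W f A] G_int_bound(1)[OF W g A]
    by (subst Bochner_Integration.integral_add) (auto intro: integrable_mult_right)
next
  fix f assume f: "f \<in> G_space W 1"
  have fin: "G_sup W 1 f < \<infinity>" using f unfolding G_space_def by simp
  have "ennreal (norm (phiA W A f)) \<le> G_sup W 1 f"
    unfolding phiA_def
    using integral_norm_bound_ennreal[OF G_int_bound(1)[OF W f A]] G_int_bound(2)[OF W f A]
    by (rule order_trans)
  then have "norm (phiA W A f) \<le> enn2real (G_sup W 1 f)"
    using enn2real_mono[of "ennreal (norm (phiA W A f))" "G_sup W 1 f"] fin by simp
  then show "\<bar>phiA W A f\<bar> \<le> 1 * G_norm W 1 f" unfolding G_norm_def by simp
qed


lemma ex_ultra_seq: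
  "\<exists>U :: nat filter. U \<noteq> bot \<and> U \<le> sequentially \<and> (\<forall>P. eventually P U \<or> eventually (\<lambda>x. \<not> P x) U)"
proof -
  let ?F = "sequentially :: nat filter"
  let ?R = "{(b, a). a \<noteq> bot \<and> a \<le> b \<and> b \<le> ?F}"
  have bot_notin_R: "c \<in> Chains ?R \<Longrightarrow> bot \<notin> c" for c
    by (auto simp: Chains_def)
  have FR[simp]: "Field ?R = {G. G \<noteq> bot \<and> G \<le> ?F}"
    by (auto simp: Field_def bot_unique)
  have "\<exists>m\<in>Field ?R. \<forall>a\<in>Field ?R. (m, a) \<in> ?R \<longrightarrow> a = m"
  proof (rule Zorns_po_lemma)
    show "Partial_order ?R"
      by (auto simp: partial_order_on_def preorder_on_def
          antisym_def refl_on_def trans_def Field_def bot_unique)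
    show "\<exists>u\<in>Field ?R. \<forall>a\<in>C. (a, u) \<in> ?R" if C: "C \<in> Chains ?R" for C
    proof (simp, intro exI conjI ballI)
      have Inf_C: "Inf C \<noteq> bot" "Inf C \<le> ?F" if "C \<noteq> {}"
      proof -
        from C that have "Inf C = bot \<longleftrightarrow> (\<exists>x\<in>C. x = bot)"
          unfolding trivial_limit_def by (intro eventually_Inf_base) (auto simp: Chains_def)
        with C show "Inf C \<noteq> bot"
          by (simp add: bot_notin_R)
        from that obtain x where "x \<in> C" by auto
        with C show "Inf C \<le> ?F"
          by (auto intro!: Inf_lower2[of x] simp: Chains_def)
      qed
      then have [simp]: "inf ?F (Inf C) = (if C = {} then ?F else Inf C)"
        using C by (auto simp add: inf_absorb2)
      from C show "inf ?F (Inf C) \<noteq> bot"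
        by (simp add: Inf_C)
      from C show "inf ?F (Inf C) \<le> ?F"
        by (simp add: Chains_def Inf_C)
      with C show "inf ?F (Inf C) \<le> x" "x \<le> ?F" if "x \<in> C" for x
        using that by (auto intro: Inf_lower simp: Chains_def)
    qed
  qed
  then obtain U where U1: "U \<in> Field ?R" and U2: "\<forall>a\<in>Field ?R. (U, a) \<in> ?R \<longrightarrow> a = U"
    by blast
  have U: "U \<noteq> bot" "U \<le> ?F" using U1 by simp_all
  have max: "G = U" if G: "G \<noteq> bot" "G \<le> U" for G
  proof -
    have "G \<le> ?F" using G(2) U(2) by (rule order.trans)
    then have "G \<in> Field ?R" using G by simp
    moreover have "(U, G) \<in> ?R" using G U by simp
    ultimately show "G = U" using U2 by blast
  qed
  have "eventually P U \<or> eventually (\<lambda>x. \<not> P x) U" for P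
  proof (rule disjCI)
    assume "\<not> eventually (\<lambda>x. \<not> P x) U"
    then have "inf U (principal {x. P x}) \<noteq> bot"
      by (simp add: trivial_limit_def eventually_inf_principal not_eventually)
    then have "inf U (principal {x. P x}) = U" by (rule max) simp
    have "eventually P (inf U (principal {x. P x}))" by (simp add: eventually_inf_principal)
    then show "eventually P U" using \<open>inf U (principal {x. P x}) = U\<close> by simp
  qed
  then show ?thesis using U by blast
qed

lemma ultra_conv:
  fixes U :: "nat filter" and x :: "nat \<Rightarrow> real"
  assumes U: "U \<noteq> bot" "\<forall>P. eventually P U \<or> eventually (\<lambda>x. \<not> P x) U"
    and b: "\<And>k. \<bar>x k\<bar> \<le> C"
  shows "(x \<longlongrightarrow> Lim U x) U"
proof -
  let ?G = "filtermap x U"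
  have "compact (cball (0::real) C)" by simp
  moreover have "?G \<noteq> bot" using U(1) by (simp add: filtermap_bot_iff)
  moreover have "eventually (\<lambda>y. y \<in> cball 0 C) ?G"
    using b by (simp add: eventually_filtermap)
  ultimately obtain L where L: "inf (nhds L) ?G \<noteq> bot"
    unfolding compact_filter by blast
  have "(x \<longlongrightarrow> L) U"
  proof (rule topological_tendstoI)
    fix S assume S: "open S" "L \<in> S"
    show "eventually (\<lambda>k. x k \<in> S) U"
    proof (rule ccontr)
      assume "\<not> eventually (\<lambda>k. x k \<in> S) U"
      then have "eventually (\<lambda>k. x k \<notin> S) U" using U(2) by blast
      then have e1: "eventually (\<lambda>y. y \<notin> S) ?G" by (simp add: eventually_filtermap)
      have e2: "eventually (\<lambda>y. y \<in> S) (nhds L)" using S by (rule eventually_nhds_in_open)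
      have "eventually (\<lambda>y. False) (inf (nhds L) ?G)"
        unfolding eventually_inf using e1 e2 by blast
      then show False using L by (simp add: trivial_limit_def)
    qed
  qed
  then show ?thesis using tendsto_Lim[of U x L] U(1) by simp
qed


lemma G_norm_nonneg: "0 \<le> G_norm W p f"
  unfolding G_norm_def by simp

lemma part1:
  assumes p: "1 \<le> p" and W: "W \<in> WeightClass"
  shows "\<forall>\<epsilon>>0. \<exists>T :: (nat \<Rightarrow> real) \<Rightarrow> (real \<Rightarrow> real).
            (\<forall>x\<in>lp_space p. T x \<in> G_space W p)
          \<and> (\<forall>x\<in>lp_space p. \<forall>y\<in>lp_space p. \<forall>a b.
               T (\<lambda>n. a * x n + b * y n) = (\<lambda>t. a * T x t + b * T y t))
          \<and> (\<forall>x\<in>lp_space p. lp_norm p x \<le> G_norm W p (T x)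
               \<and> G_norm W p (T x) \<le> (1 + \<epsilon>) * lp_norm p x)"
proof (intro allI impI)
  fix \<epsilon> :: real assume e: "\<epsilon> > 0"
  define \<delta> where "\<delta> = (1 + \<epsilon>) powr (-p)"
  have d0: "0 < \<delta>" unfolding \<delta>_def using e by simp
  have "(1 + \<epsilon>) powr (-p) < (1 + \<epsilon>) powr 0" using e p by (intro powr_less_mono) auto
  then have d1: "\<delta> < 1" unfolding \<delta>_def using e by simp
  interpret C: constr W \<delta> p by unfold_locales (use W d0 d1 p in auto)
  have "\<delta> powr (-1/p) = (1 + \<epsilon>) powr (-p * (-1/p))" unfolding \<delta>_def by (simp add: powr_powr)
  also have "-p * (-1/p) = 1" using p by simp
  finally have dp: "\<delta> powr (-1/p) = 1 + \<epsilon>" using e by simp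
  show "\<exists>T :: (nat \<Rightarrow> real) \<Rightarrow> (real \<Rightarrow> real).
            (\<forall>x\<in>lp_space p. T x \<in> G_space W p)
          \<and> (\<forall>x\<in>lp_space p. \<forall>y\<in>lp_space p. \<forall>a b.
               T (\<lambda>n. a * x n + b * y n) = (\<lambda>t. a * T x t + b * T y t))
          \<and> (\<forall>x\<in>lp_space p. lp_norm p x \<le> G_norm W p (T x)
               \<and> G_norm W p (T x) \<le> (1 + \<epsilon>) * lp_norm p x)"
    by (rule exI[of _ C.T]) (use C.T_props C.T_lin dp in auto)
qed


context constr
begin

lemma g_facts:
  assumes p: "p = 1" and dd: "\<delta> = 1/2"
  defines "h \<equiv> (\<lambda>k n. if n = k then (1/2::real) else 0)"
  shows "T (h k) \<in> G_space W 1" "G_norm W 1 (T (h k)) \<le> 1"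
    "\<And>t. T (h k) t = (if t \<in> I k then 1/2 * c k else 0)"
    "c k = 1 / a k"
proof -
  have hfun: "(\<lambda>n. \<bar>h k n\<bar> powr p) = (\<lambda>n. if n = k then 1/2 else 0)"
    unfolding h_def p by (auto simp: fun_eq_iff)
  have hs: "(\<lambda>n. \<bar>h k n\<bar> powr p) sums (1/2)"
    unfolding hfun using sums_single[of k "\<lambda>_. 1/2::real"] by simp
  have hl: "h k \<in> lp_space p" unfolding lp_space_def using hs sums_summable by blast
  have hn: "lp_norm p (h k) = 1/2" unfolding lp_norm_def using sums_unique[OF hs] p by simp
  show "T (h k) \<in> G_space W 1" using T_props(1)[OF hl] p by simp
  have "G_norm W 1 (T (h k)) \<le> \<delta> powr (-1/p) * lp_norm p (h k)" using T_props(3)[OF hl] p by simp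
  also have "\<delta> powr (-1/p) = 2" unfolding dd p by (simp add: powr_minus_divide)
  finally show "G_norm W 1 (T (h k)) \<le> 1" using hn by simp
  show "\<And>t. T (h k) t = (if t \<in> I k then 1/2 * c k else 0)"
  proof -
    fix t show "T (h k) t = (if t \<in> I k then 1/2 * c k else 0)"
    proof (cases "\<exists>j. t \<in> I j")
      case True
      then obtain j where j: "t \<in> I j" by auto
      show ?thesis
      proof (cases "j = k")
        case True then show ?thesis using j T_in[OF j, of "h k"] unfolding h_def by simp
      next
        case False
        then have "t \<notin> I k" using I_disj j by blast
        then show ?thesis using False T_in[OF j, of "h k"] unfolding h_def by simp
      qed
    next
      case False then show ?thesis using T_out[of t "h k"] by auto
    qed
  qed
  show "c k = 1 / a k" unfolding c_def using a_pos[of k] p by (simp add: powr_minus_divide)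
qed

lemma intW_I: "(\<integral> t. W t * indicator (I k) t \<partial>lebesgue) = a k"
proof -
  have m: "(\<lambda>t. W t * indicator (I k) t) \<in> borel_measurable lebesgue"
  proof -
    have "(\<lambda>t. (W t * indicator {0<..} t) * indicator (I k) t) \<in> borel_measurable lebesgue"
      using Wi_meas[OF W] I_sets[of k] by measurable
    moreover have "(\<lambda>t. (W t * indicator {0<..} t) * indicator (I k) t) = (\<lambda>t. W t * indicator (I k) t)"
      using I_pos[of k] by (auto simp: fun_eq_iff indicator_def)
    ultimately show ?thesis by simp
  qed
  have nn: "\<And>t. 0 \<le> W t * indicator (I k) t"
    using I_pos[of k] WC_D(2)[OF W] by (auto simp: indicator_def less_imp_le)
  have "(\<integral> t. W t * indicator (I k) t \<partial>lebesgue) = enn2real (\<integral>\<^sup>+ t. ennreal (W t * indicator (I k) t) \<partial>lebesgue)"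
    by (rule integral_eq_nn_integral[OF m]) (use nn in auto)
  also have "(\<integral>\<^sup>+ t. ennreal (W t * indicator (I k) t) \<partial>lebesgue) = (\<integral>\<^sup>+ t\<in>I k. ennreal (W t) \<partial>lebesgue)"
    by (intro nn_integral_cong) (auto simp: indicator_def)
  finally show ?thesis unfolding a_def .
qed

end


lemma part2:
  assumes W: "W \<in> WeightClass"
  shows "\<not> reflexive_space (G_space W 1) (G_norm W 1)"
proof
  assume R: "reflexive_space (G_space W 1) (G_norm W 1)"
  interpret D: constr W "1/2" 1 by unfold_locales (use W in auto)
  define V where "V = G_space W 1"
  define N where "N = G_norm W 1"
  define h where "h = (\<lambda>(k::nat) (n::nat). if n = k then (1/2::real) else 0)"
  define g where "g = (\<lambda>k. D.T (h k))"
  have gV: "g k \<in> V" for k unfolding g_def V_def h_def by (rule D.g_facts(1)) auto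
  have gN: "N (g k) \<le> 1" for k unfolding g_def N_def h_def by (rule D.g_facts(2)) auto
  have gval: "g k t = (if t \<in> D.I k then 1/2 * D.c k else 0)" for k t
    unfolding g_def h_def by (rule D.g_facts(3)) auto
  have cval: "D.c k = 1 / D.a k" for k by (rule D.g_facts(4)) auto
  obtain U :: "nat filter" where U: "U \<noteq> bot" "U \<le> sequentially"
    "\<forall>P. eventually P U \<or> eventually (\<lambda>x. \<not> P x) U"
    using ex_ultra_seq by blast
  define Phi :: "((real \<Rightarrow> real) \<Rightarrow> real) \<Rightarrow> real" where
    "Phi = (\<lambda>\<phi>. Lim U (\<lambda>k. 2 * \<phi> (g k)))"
  have bnd: "\<exists>C. \<forall>k. \<bar>2 * \<phi> (g k)\<bar> \<le> C" if phi: "\<phi> \<in> dual_space V N" for \<phi>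
  proof -
    obtain C where C: "\<forall>f\<in>V. \<bar>\<phi> f\<bar> \<le> C * N f" using phi[unfolded dual_space_def] by blast
    have "\<bar>2 * \<phi> (g k)\<bar> \<le> 2 * \<bar>C\<bar>" for k
    proof -
      have "\<bar>\<phi> (g k)\<bar> \<le> C * N (g k)" using C gV by auto
      also have "\<dots> \<le> \<bar>C\<bar> * N (g k)" using G_norm_nonneg[of W 1 "g k"] unfolding N_def
        by (intro mult_right_mono) auto
      also have "\<dots> \<le> \<bar>C\<bar> * 1" using gN[of k] by (intro mult_left_mono) auto
      finally show ?thesis by simp
    qed
    then show ?thesis by blast
  qed
  have conv: "((\<lambda>k. 2 * \<phi> (g k)) \<longlongrightarrow> Phi \<phi>) U" if phi: "\<phi> \<in> dual_space V N" for \<phi>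
  proof -
    obtain C where "\<forall>k. \<bar>2 * \<phi> (g k)\<bar> \<le> C" using bnd[OF phi] by blast
    then show ?thesis unfolding Phi_def using ultra_conv[OF U(1) U(3), of "\<lambda>k. 2 * \<phi> (g k)" C] by blast
  qed
  have lin: "\<forall>\<phi>\<in>dual_space V N. \<forall>\<psi>\<in>dual_space V N. \<forall>a b.
             Phi (\<lambda>f. a * \<phi> f + b * \<psi> f) = a * Phi \<phi> + b * Phi \<psi>"
  proof (intro ballI allI)
    fix \<phi> \<psi> a b assume \<phi>: "\<phi> \<in> dual_space V N" and \<psi>: "\<psi> \<in> dual_space V N"
    have "((\<lambda>k. a * (2 * \<phi> (g k)) + b * (2 * \<psi> (g k))) \<longlongrightarrow> a * Phi \<phi> + b * Phi \<psi>) U"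
      by (intro tendsto_add tendsto_mult_left conv \<phi> \<psi>)
    moreover have "(\<lambda>k. a * (2 * \<phi> (g k)) + b * (2 * \<psi> (g k))) = (\<lambda>k. 2 * (a * \<phi> (g k) + b * \<psi> (g k)))"
      by (simp add: fun_eq_iff algebra_simps)
    ultimately have "((\<lambda>k. 2 * (a * \<phi> (g k) + b * \<psi> (g k))) \<longlongrightarrow> a * Phi \<phi> + b * Phi \<psi>) U" by simp
    then show "Phi (\<lambda>f. a * \<phi> f + b * \<psi> f) = a * Phi \<phi> + b * Phi \<psi>"
      unfolding Phi_def using tendsto_Lim U(1) by (simp add: tendsto_Lim)
  qed
  have bd: "\<forall>\<phi>\<in>dual_space V N. \<bar>Phi \<phi>\<bar> \<le> 2 * dual_norm V N \<phi>"
  proof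
    fix \<phi> assume \<phi>: "\<phi> \<in> dual_space V N"
    obtain C where C: "\<forall>f\<in>V. \<bar>\<phi> f\<bar> \<le> C * N f" using \<phi>[unfolded dual_space_def] by blast
    have ba: "bdd_above ((\<lambda>f. \<bar>\<phi> f\<bar>) ` {f\<in>V. N f \<le> 1})"
    proof (rule bdd_aboveI2)
      fix f assume f: "f \<in> {f\<in>V. N f \<le> 1}"
      have "\<bar>\<phi> f\<bar> \<le> C * N f" using C f by auto
      also have "\<dots> \<le> \<bar>C\<bar> * N f" using G_norm_nonneg[of W 1 f] unfolding N_def
        by (intro mult_right_mono) auto
      also have "\<dots> \<le> \<bar>C\<bar> * 1" using f by (intro mult_left_mono) auto
      finally show "\<bar>\<phi> f\<bar> \<le> \<bar>C\<bar>" by simp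
    qed
    have "\<bar>\<phi> (g k)\<bar> \<le> dual_norm V N \<phi>" for k
      unfolding dual_norm_def by (rule cSup_upper[OF _ ba]) (use gV gN in auto)
    then have ev: "eventually (\<lambda>k. \<bar>2 * \<phi> (g k)\<bar> \<le> 2 * dual_norm V N \<phi>) U" by (simp add: abs_mult)
    show "\<bar>Phi \<phi>\<bar> \<le> 2 * dual_norm V N \<phi>"
      by (rule tendsto_upperbound[OF tendsto_rabs[OF conv[OF \<phi>]] ev]) (use U(1) in simp)
  qed
  from R[unfolded reflexive_space_def, folded V_def N_def, rule_format, of Phi] lin bd
  obtain f where f: "f \<in> V" and rep: "\<And>\<phi>. \<phi> \<in> dual_space V N \<Longrightarrow> Phi \<phi> = \<phi> f" by blast
  have phiD: "phiA W A \<in> dual_space V N" if "A \<in> sets lebesgue" "A \<subseteq> {0<..}" for A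
    unfolding V_def N_def using phiA_dual[OF W that] .
  have PhiL: "Phi \<phi> = L" if "\<phi> \<in> dual_space V N" "((\<lambda>k. 2 * \<phi> (g k)) \<longlongrightarrow> L) U" for \<phi> L
    using tendsto_unique[OF U(1) conv[OF that(1)] that(2)] .
  have zero: "phiA W {0<..real n} f = 0" for n
  proof -
    have "phiA W {0<..real n} (g k) = 0" if k: "n \<le> k" for k
    proof -
      have "(\<lambda>t. g k t * W t * indicator {0<..real n} t) = (\<lambda>t. 0)"
      proof
        fix t show "g k t * W t * indicator {0<..real n} t = 0"
        proof (cases "t \<in> D.I k")
          case True
          then have "real k < t" by (rule D.I_far)
          then show ?thesis using k by (simp add: indicator_def)
        qed (simp add: gval)
      qed
      then show ?thesis unfolding phiA_def by simp
    qed
    then have "eventually (\<lambda>k. 2 * phiA W {0<..real n} (g k) = 0) sequentially"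
      using eventually_sequentially by force
    then have "((\<lambda>k. 2 * phiA W {0<..real n} (g k)) \<longlongrightarrow> 0) sequentially"
      by (rule tendsto_eventually)
    then have "((\<lambda>k. 2 * phiA W {0<..real n} (g k)) \<longlongrightarrow> 0) U"
      by (rule tendsto_mono[OF U(2)])
    moreover have d: "phiA W {0<..real n} \<in> dual_space V N" by (rule phiD) auto
    ultimately have "Phi (phiA W {0<..real n}) = 0" by (intro PhiL)
    then show ?thesis using rep[OF d] by simp
  qed
  have one: "phiA W {0<..} f = 1"
  proof -
    have "2 * phiA W {0<..} (g k) = 1" for k
    proof -
      have "(\<lambda>t. g k t * W t * indicator {0<..} t) = (\<lambda>t. (1/2 * D.c k) * (W t * indicator (D.I k) t))"
        using D.I_pos[of k] by (auto simp: fun_eq_iff gval indicator_def)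
      then have "phiA W {0<..} (g k) = (1/2 * D.c k) * D.a k"
        unfolding phiA_def by (simp add: D.intW_I)
      then show ?thesis using cval[of k] D.a_pos[of k] by simp
    qed
    then have "((\<lambda>k. 2 * phiA W {0<..} (g k)) \<longlongrightarrow> 1) U" by simp
    moreover have d: "phiA W {0<..} \<in> dual_space V N" by (rule phiD) auto
    ultimately have "Phi (phiA W {0<..}) = 1" by (intro PhiL)
    then show ?thesis using rep[OF d] by simp
  qed
  have fG: "f \<in> G_space W 1" using f unfolding V_def .
  have intA: "integrable lebesgue (\<lambda>t. f t * W t * indicator A t)" if "A \<in> sets lebesgue" "A \<subseteq> {0<..}" for A
    by (rule G_int_bound(1)[OF W fG that])
  have "(\<lambda>n. phiA W {0<..real n} f) \<longlonglongrightarrow> phiA W {0<..} f"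
    unfolding phiA_def
  proof (rule integral_dominated_convergence[where w="\<lambda>t. norm (f t * W t * indicator {0<..} t)"])
    show "(\<lambda>t. f t * W t * indicator {0<..} t) \<in> borel_measurable lebesgue"
      by (rule borel_measurable_integrable, rule intA) auto
    show "(\<lambda>t. f t * W t * indicator {0<..real n} t) \<in> borel_measurable lebesgue" for n
      by (rule borel_measurable_integrable, rule intA) auto
    show "integrable lebesgue (\<lambda>t. norm (f t * W t * indicator {0<..} t))"
      by (rule integrable_norm, rule intA) auto
    show "AE t in lebesgue. (\<lambda>n. f t * W t * indicator {0<..real n} t) \<longlonglongrightarrow> f t * W t * indicator {0<..} t"
    proof (rule AE_I2)
      fix t :: real
      obtain M :: nat where M: "t \<le> real M" using real_arch_simple by blast
      have "eventually (\<lambda>n. f t * W t * indicator {0<..real n} t = f t * W t * indicator {0<..} t) sequentially"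
        unfolding eventually_sequentially
      proof (intro exI allI impI)
        fix n assume "M \<le> n"
        then have "t \<le> real n" using M by (meson of_nat_le_iff order_trans)
        then show "f t * W t * indicator {0<..real n} t = f t * W t * indicator {0<..} t"
          by (simp add: indicator_def)
      qed
      then show "(\<lambda>n. f t * W t * indicator {0<..real n} t) \<longlonglongrightarrow> f t * W t * indicator {0<..} t"
        by (rule tendsto_eventually)
    qed
    show "AE t in lebesgue. norm (f t * W t * indicator {0<..real n} t) \<le> norm (f t * W t * indicator {0<..} t)" for n
      by (rule AE_I2) (simp add: indicator_def)
  qed
  then have "(\<lambda>n. 0::real) \<longlonglongrightarrow> 1" using zero one by simp
  then show False using LIMSEQ_unique[OF tendsto_const] by force
qed


theorem mainTheorem11:
  fixes p :: real and W :: "real \<Rightarrow> real"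
  assumes "1 \<le> p" and "W \<in> WeightClass"
  shows "(\<forall>\<epsilon>>0. \<exists>T :: (nat \<Rightarrow> real) \<Rightarrow> (real \<Rightarrow> real).
            (\<forall>x\<in>lp_space p. T x \<in> G_space W p)
          \<and> (\<forall>x\<in>lp_space p. \<forall>y\<in>lp_space p. \<forall>a b.
               T (\<lambda>n. a * x n + b * y n) = (\<lambda>t. a * T x t + b * T y t))
          \<and> (\<forall>x\<in>lp_space p. lp_norm p x \<le> G_norm W p (T x)
               \<and> G_norm W p (T x) \<le> (1 + \<epsilon>) * lp_norm p x))
         \<and> \<not> reflexive_space (G_space W 1) (G_norm W 1)"
  using part1[OF assms] part2[OF assms(2)] by blast

end
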